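(* There is an absolute constant $c'>0$ such that the following holds. Let $m\ge1$, $n>2m$ be integers and $\sigma_1^2,\dots,\sigma_n^2>0$. Let $L\subset G^{r}$, $|L|=2m$, consist of $2m$ arms of $G^{r}$ with the largest variances. Define $\eta_F=\binom{2m}{m-1}^{-1}$ for every $F\subset L$ with $|F|=m-1$ and $\eta_F=0$ for every other $F\subset[n]$ with $|F|=m-1$. Then \[ \sum_{M\subset[n]:|M|=m}\Big(\sum_{l\in M}\eta_{M\setminus\{l\}}\sigma_l^2\Big)\,\mathrm{Ent}\big(\{\eta_{M\setminus\{l\}}\sigma_l^2\}_{l\in M}\big)\ \ge\ c'\sum_{i\in G^{l}}\sigma_i^2\,\mathrm{Ent}(\sigma^2_{G^{r}})-\ln(2)\sum_{i\in L}\sigma_i^2 . \]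
   Context: For a nonnegative vector $a$, $\mathrm{Ent}(a)=-\sum_i\hat a_i\ln\hat a_i$ with $\hat a_i=a_i/\sum_ja_j$ and $0\ln0=0$ (a term whose vector is identically zero contributes $0$); $\sigma^2_S=(\sigma_i^2)_{i\in S}$. Let $\underline\sigma^2=\min_i\sigma_i^2$, $G_j=\{i\in[n]:2^{j-1}\le\sigma_i^2/\underline\sigma^2<2^j\}$ for $j=1,\dots,k$ covering $[n]$. $G^{l}=\bigcup_{j:|G_j|\le2m}G_j$. $G'_j=G_j$ if $|G_j|\le2m$, otherwise $G'_j\subset G_j$ with $|G'_j|=2m$; $G^{r}=\bigcup_jG'_j$, the choices made to maximize $\mathrm{Ent}(\sigma^2_{G^{r}})$. (Under $n>2m$ one has $|G^{r}|\ge2m$, so $L$ exists.) *)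

theory Defs
  imports Complex_Main
begin

text \<open>Arms are indexed by [n] = {1..n}; v i is the variance sigma_i^2.\<close>

definition Ent :: "('a \<Rightarrow> real) \<Rightarrow> 'a set \<Rightarrow> real" where
  "Ent a S = (let s = (\<Sum>j\<in>S. a j) in
     if s = 0 then 0
     else - (\<Sum>i\<in>S. if a i = 0 then 0 else (a i / s) * ln (a i / s)))"

definition minvar :: "nat \<Rightarrow> (nat \<Rightarrow> real) \<Rightarrow> real" where
  "minvar n v = Min (v ` {1..n})"

definition grp :: "nat \<Rightarrow> (nat \<Rightarrow> real) \<Rightarrow> nat \<Rightarrow> nat set" where
  "grp n v j = {i \<in> {1..n}. (2::real) ^ (j - 1) \<le> v i / minvar n v \<and> v i / minvar n v < 2 ^ j}"

definition Gl :: "nat \<Rightarrow> nat \<Rightarrow> (nat \<Rightarrow> real) \<Rightarrow> nat set" where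
  "Gl n m v = \<Union> {grp n v j | j. 1 \<le> j \<and> card (grp n v j) \<le> 2 * m}"

definition admissible_Gr :: "nat \<Rightarrow> nat \<Rightarrow> (nat \<Rightarrow> real) \<Rightarrow> nat set \<Rightarrow> bool" where
  "admissible_Gr n m v R \<longleftrightarrow> R \<subseteq> {1..n} \<and>
     (\<forall>j\<ge>1. if card (grp n v j) \<le> 2 * m then R \<inter> grp n v j = grp n v j
             else card (R \<inter> grp n v j) = 2 * m)"

definition is_Gr :: "nat \<Rightarrow> nat \<Rightarrow> (nat \<Rightarrow> real) \<Rightarrow> nat set \<Rightarrow> bool" where
  "is_Gr n m v R \<longleftrightarrow> admissible_Gr n m v R \<and>
     (\<forall>R'. admissible_Gr n m v R' \<longrightarrow> Ent v R' \<le> Ent v R)"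

definition is_top :: "nat \<Rightarrow> (nat \<Rightarrow> real) \<Rightarrow> nat set \<Rightarrow> nat set \<Rightarrow> bool" where
  "is_top m v R L \<longleftrightarrow> L \<subseteq> R \<and> card L = 2 * m \<and> (\<forall>i\<in>L. \<forall>j\<in>R - L. v j \<le> v i)"

definition eta :: "nat \<Rightarrow> nat set \<Rightarrow> nat set \<Rightarrow> real" where
  "eta m L F = (if F \<subseteq> L \<and> card F = m - 1 then 1 / real ((2 * m) choose (m - 1)) else 0)"

end

theory Submission
  imports Defs
begin


lemma ln2_half: "ln (2::real) \<ge> 1/2"
proof -
  have "(exp (1/2::real))^2 = exp 1" by (simp add: power2_eq_square flip: exp_add)
  also have "\<dots> \<le> 2^2" using exp_le by simp
  finally have "exp (1/2::real) \<le> 2"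
    by (rule power2_le_imp_le) simp
  hence "ln (exp (1/2::real)) \<le> ln 2" by (subst ln_le_cancel_iff) auto
  thus ?thesis by simp
qed

lemma ln_le_2sqrt: assumes "(y::real) > 0" shows "ln y \<le> 2 * sqrt y"
proof -
  have "ln (sqrt y) \<le> sqrt y - 1" using assms by (intro ln_le_minus_one) auto
  thus ?thesis using assms by (simp add: ln_sqrt)
qed

lemma ent_nonneg:
  assumes "finite A" "\<forall>i\<in>A. a i \<ge> (0::real)"
  shows "Ent a A \<ge> 0"
proof -
  define s where "s = (\<Sum>j\<in>A. a j)"
  have le: "a i \<le> s" if "i \<in> A" for i
    unfolding s_def using assms that by (intro member_le_sum) auto
  show ?thesis
  proof (cases "s = 0")
    case True thus ?thesis by (simp add: Ent_def s_def[symmetric])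
  next
    case False
    have spos: "s > 0" using False assms by (simp add: s_def sum_nonneg order_le_neq_trans)
    have "(if a i = 0 then 0 else (a i / s) * ln (a i / s)) \<le> 0" if "i \<in> A" for i
    proof (cases "a i = 0")
      case False
      hence "a i > 0" using assms that by force
      moreover have "a i / s \<le> 1" using le[OF that] spos by simp
      ultimately have "ln (a i / s) \<le> 0" using spos by simp
      hence "(a i / s) * ln (a i / s) \<le> 0" using \<open>a i > 0\<close> spos by (intro mult_nonneg_nonpos) auto
      thus ?thesis using False by simp
    qed simp
    hence "(\<Sum>i\<in>A. if a i = 0 then 0 else (a i / s) * ln (a i / s)) \<le> 0" by (intro sum_nonpos) auto
    thus ?thesis using False by (simp add: Ent_def s_def[symmetric] Let_def)
  qed
qed

lemma ent_eq:
  assumes "finite A" "A \<noteq> {}" "\<forall>i\<in>A. a i > (0::real)"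
  shows "(\<Sum>j\<in>A. a j) * Ent a A = (\<Sum>i\<in>A. a i * ln ((\<Sum>j\<in>A. a j) / a i))"
proof -
  define s where "s = (\<Sum>j\<in>A. a j)"
  have spos: "s > 0" unfolding s_def using assms by (intro sum_pos) auto
  have cg: "(\<Sum>i\<in>A. if a i = 0 then 0 else (a i / s) * ln (a i / s)) = (\<Sum>i\<in>A. (a i / s) * ln (a i / s))"
    using assms by (intro sum.cong) auto
  have "s * Ent a A = s * (- (\<Sum>i\<in>A. (a i / s) * ln (a i / s)))"
    using spos assms unfolding Ent_def Let_def s_def[symmetric] cg by simp
  also have "\<dots> = (\<Sum>i\<in>A. - (s * (a i / s * ln (a i / s))))"
    by (simp add: sum_distrib_left sum_negf)
  also have "\<dots> = (\<Sum>i\<in>A. a i * ln (s / a i))"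
  proof (rule sum.cong[OF refl])
    fix i assume "i \<in> A"
    hence "a i > 0" using assms by auto
    thus "- (s * (a i / s * ln (a i / s))) = a i * ln (s / a i)"
      using spos by (simp add: ln_div algebra_simps)
  qed
  finally show ?thesis by (simp add: s_def)
qed

lemma lemG:
  fixes a x S :: real
  assumes "0 < a" "a \<le> x" "2 * x \<le> S"
  shows "a * ln (S / a) \<le> 4 * (x * ln (S / x))"
proof -
  have xp: "x > 0" using assms by simp
  have Sp: "S > 0" using assms by simp
  have l2: "ln (S / x) \<ge> ln 2" using xp assms by (subst ln_le_cancel_iff) (auto simp: field_simps)
  show ?thesis
  proof (cases "ln (S / x) \<ge> ln (S / a) / 2")
    case True
    have "a * ln (S / a) \<le> a * (2 * ln (S / x))" using True assms by (intro mult_left_mono) auto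
    also have "\<dots> \<le> x * (2 * ln (S / x))" using assms l2 ln2_half by (intro mult_right_mono) auto
    also have "\<dots> \<le> 4 * (x * ln (S / x))"
    proof -
      have "x * ln (S / x) \<ge> 0" using l2 ln2_half xp by (intro mult_nonneg_nonneg) auto
      thus ?thesis by simp
    qed
    finally show ?thesis .
  next
    case False
    hence "ln (S / x) < ln (sqrt (S / a))" using assms Sp by (simp add: ln_sqrt)
    hence "S / x < sqrt (S / a)" using xp Sp assms by (subst (asm) ln_less_cancel_iff) auto
    hence "S < x * sqrt (S / a)" using xp by (simp add: field_simps)
    have q: "sqrt (S / a) * sqrt (S * a) = S"
    proof -
      have "S / a * (S * a) = S^2" using assms by (simp add: field_simps power2_eq_square)
      hence "sqrt (S / a) * sqrt (S * a) = sqrt (S^2)" by (simp add: real_sqrt_mult[symmetric])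
      thus ?thesis using Sp by simp
    qed
    have r: "a * sqrt (S / a) = sqrt (S * a)"
    proof -
      have "S * a = a^2 * (S / a)" using assms by (simp add: field_simps power2_eq_square)
      hence "sqrt (S * a) = sqrt (a^2) * sqrt (S / a)" by (metis real_sqrt_mult)
      thus ?thesis using assms by simp
    qed
    have "S * sqrt (S * a) < x * sqrt (S / a) * sqrt (S * a)"
      using \<open>S < x * sqrt (S / a)\<close> Sp assms by (intro mult_strict_right_mono) auto
    also have "\<dots> = x * S" unfolding mult.assoc q ..
    also have "\<dots> = S * x" by (rule mult.commute)
    finally have "S * sqrt (S * a) < S * x" .
    hence x1: "sqrt (S * a) < x" using Sp by simp
    have "a * ln (S / a) \<le> a * (2 * sqrt (S / a))"
      using ln_le_2sqrt[of "S/a"] assms Sp by (intro mult_left_mono) auto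
    also have "\<dots> = 2 * sqrt (S * a)" using r by simp
    also have "\<dots> \<le> 2 * x" using x1 by simp
    also have "\<dots> \<le> 4 * (x * ln (S / x))"
    proof -
      have "x * (1/2) \<le> x * ln (S / x)" using l2 ln2_half xp by (intro mult_left_mono) auto
      thus ?thesis by simp
    qed
    finally show ?thesis .
  qed
qed

lemma binent:
  fixes X Y :: real assumes "X > 0" "Y > 0"
  shows "X * ln ((X+Y)/X) + Y * ln ((X+Y)/Y) \<le> (X+Y) * ln 2"
proof -
  have a: "X * ln ((X+Y)/X) = X * ln ((X+Y)/(2*X)) + X * ln 2"
    using assms by (simp add: ln_div ln_mult algebra_simps)
  have b: "Y * ln ((X+Y)/Y) = Y * ln ((X+Y)/(2*Y)) + Y * ln 2"
    using assms by (simp add: ln_div ln_mult algebra_simps)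
  have c: "X * ln ((X+Y)/(2*X)) \<le> X * ((X+Y)/(2*X) - 1)"
    using assms by (intro mult_left_mono ln_le_minus_one) auto
  have d: "Y * ln ((X+Y)/(2*Y)) \<le> Y * ((X+Y)/(2*Y) - 1)"
    using assms by (intro mult_left_mono ln_le_minus_one) auto
  have e: "X * ((X+Y)/(2*X) - 1) + Y * ((X+Y)/(2*Y) - 1) = 0" using assms by (simp add: field_simps)
  show ?thesis using a b c d e by (simp add: algebra_simps)
qed

lemma binom_facts:
  fixes k :: nat
  shows "(Suc (Suc (2*k)) choose Suc k) \<le> 2 * (Suc (Suc (2*k)) choose k)"
    and "(Suc (Suc (2*k)) choose k) \<le> 2 * (Suc (2*k) choose k)"
proof -
  have h: "Suc k * (Suc (k + Suc k) choose Suc k) = Suc (Suc k) * (Suc (k + Suc k) choose k)"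
    by (rule Suc_times_binomial_add)
  have e: "Suc (k + Suc k) = Suc (Suc (2*k))" by simp
  define A where "A = (Suc (Suc (2*k)) choose Suc k)"
  define B where "B = (Suc (Suc (2*k)) choose k)"
  have id: "Suc k * A = Suc (Suc k) * B" using h unfolding e A_def B_def .
  have "Suc (Suc k) * B \<le> (2 * Suc k) * B" by (intro mult_le_mono1) simp
  hence "Suc k * A \<le> Suc k * (2 * B)" using id by simp
  thus "A \<le> 2 * B" by (simp only: Suc_mult_le_cancel1)
  have "Suc k * B \<le> Suc (Suc k) * B" by (intro mult_le_mono1) simp
  hence "Suc k * B \<le> Suc k * A" using id by simp
  hence le: "B \<le> A" by (simp only: Suc_mult_le_cancel1)
  have sym: "(Suc (2*k) choose (Suc k)) = (Suc (2*k) choose k)"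
    using binomial_symmetric[of k "Suc (2*k)"] by simp
  have "A = (Suc (2*k) choose k) + (Suc (2*k) choose Suc k)"
    unfolding A_def by (rule binomial_Suc_Suc)
  thus "B \<le> 2 * (Suc (2*k) choose k)" using le sym by simp
qed



lemma count_subsets:
  assumes "finite L" "l \<in> L" "card L = 2*m" "m \<ge> 1"
  shows "card {M. M \<subseteq> L \<and> card M = m \<and> l \<in> M} = (2*m-1) choose (m-1)"
proof -
  let ?B = "{B. B \<subseteq> L - {l} \<and> card B = m-1}"
  have "{M. M \<subseteq> L \<and> card M = m \<and> l \<in> M} = insert l ` ?B"
  proof (intro equalityI subsetI)
    fix M assume M: "M \<in> {M. M \<subseteq> L \<and> card M = m \<and> l \<in> M}"
    hence fin: "finite M" using assms finite_subset by blast
    have "M - {l} \<in> ?B" using M fin by auto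
    moreover have "M = insert l (M - {l})" using M by auto
    ultimately show "M \<in> insert l ` ?B" by blast
  next
    fix M assume "M \<in> insert l ` ?B"
    then obtain B where B: "B \<subseteq> L - {l}" "card B = m - 1" "M = insert l B" by auto
    have fin: "finite B" using B assms finite_subset by (meson finite_Diff)
    have "l \<notin> B" using B by auto
    hence "card M = m" using B fin assms by simp
    thus "M \<in> {M. M \<subseteq> L \<and> card M = m \<and> l \<in> M}" using B assms by auto
  qed
  moreover have "inj_on (insert l) ?B"
  proof (rule inj_onI)
    fix X Y assume X: "X \<in> ?B" and Y: "Y \<in> ?B" and e: "insert l X = insert l Y"
    have "X = insert l X - {l}" using X by auto
    also have "\<dots> = insert l Y - {l}" using e by simp
    also have "\<dots> = Y" using Y by auto
    finally show "X = Y" .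
  qed
  ultimately have "card {M. M \<subseteq> L \<and> card M = m \<and> l \<in> M} = card ?B" by (simp add: card_image)
  also have "\<dots> = card (L - {l}) choose (m-1)" using assms by (intro n_subsets) auto
  also have "card (L - {l}) = 2*m - 1" using assms by simp
  finally show ?thesis .
qed

lemma double_count:
  fixes h :: "nat \<Rightarrow> real"
  assumes "finite L" "card L = 2*m" "m \<ge> 1"
  shows "(\<Sum>M\<in>{M. M \<subseteq> L \<and> card M = m}. \<Sum>l\<in>M. h l) = real ((2*m-1) choose (m-1)) * (\<Sum>l\<in>L. h l)"
proof -
  let ?K = "{M. M \<subseteq> L \<and> card M = m}"
  have fK: "finite ?K" using assms by simp
  have "(\<Sum>M\<in>?K. \<Sum>l\<in>M. h l) = (\<Sum>M\<in>?K. \<Sum>l\<in>L. if l \<in> M then h l else 0)"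
  proof (rule sum.cong[OF refl])
    fix M assume "M \<in> ?K"
    hence "M \<subseteq> L" by auto
    hence "M = {l \<in> L. l \<in> M}" by auto
    hence "(\<Sum>l\<in>M. h l) = (\<Sum>l\<in>{l \<in> L. l \<in> M}. h l)" by simp
    also have "\<dots> = (\<Sum>l\<in>L. if l \<in> M then h l else 0)" using assms by (simp add: sum.inter_filter)
    finally show "(\<Sum>l\<in>M. h l) = (\<Sum>l\<in>L. if l \<in> M then h l else 0)" .
  qed
  also have "\<dots> = (\<Sum>l\<in>L. \<Sum>M\<in>?K. if l \<in> M then h l else 0)" by (rule sum.swap)
  also have "\<dots> = (\<Sum>l\<in>L. real ((2*m-1) choose (m-1)) * h l)"
  proof (rule sum.cong[OF refl])
    fix l assume l: "l \<in> L"
    have "(\<Sum>M\<in>?K. if l \<in> M then h l else 0) = (\<Sum>M\<in>{M \<in> ?K. l \<in> M}. h l)"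
      using fK by (subst sum.inter_filter[OF fK]) simp
    also have "{M \<in> ?K. l \<in> M} = {M. M \<subseteq> L \<and> card M = m \<and> l \<in> M}" by auto
    also have "(\<Sum>M\<in>{M. M \<subseteq> L \<and> card M = m \<and> l \<in> M}. h l) = real ((2*m-1) choose (m-1)) * h l"
      using count_subsets[OF assms(1) l assms(2,3)] by simp
    finally show "(\<Sum>M\<in>?K. if l \<in> M then h l else 0) = real ((2*m-1) choose (m-1)) * h l" .
  qed
  also have "\<dots> = real ((2*m-1) choose (m-1)) * (\<Sum>l\<in>L. h l)" by (simp add: sum_distrib_left)
  finally show ?thesis .
qed

lemma compl_pair:
  fixes v :: "nat \<Rightarrow> real"
  assumes "finite L" "card L = 2*m" "m \<ge> 1" "\<forall>i\<in>L. v i > 0"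
  shows "(\<Sum>M\<in>{M. M \<subseteq> L \<and> card M = m}. (\<Sum>i\<in>M. v i) * ln ((\<Sum>i\<in>L. v i) / (\<Sum>i\<in>M. v i)))
     \<le> real (card {M. M \<subseteq> L \<and> card M = m}) * (\<Sum>i\<in>L. v i) * ln 2 / 2"
proof -
  let ?K = "{M. M \<subseteq> L \<and> card M = m}"
  define S where "S = (\<Sum>i\<in>L. v i)"
  define f where "f M = (\<Sum>i\<in>M. v i) * ln (S / (\<Sum>i\<in>M. v i))" for M
  have memK: "L - M \<in> ?K" if M: "M \<in> ?K" for M
  proof -
    have fM: "finite M" using M assms finite_subset by blast
    have "card (L - M) = card L - card M" using card_Diff_subset[OF fM] M by auto
    hence "card (L - M) = m" using M assms by simp
    thus "L - M \<in> ?K" by auto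
  qed
  have re: "(\<Sum>M\<in>?K. f (L - M)) = (\<Sum>M\<in>?K. f M)"
    by (rule sum.reindex_bij_witness[where i="\<lambda>M. L - M" and j="\<lambda>M. L - M"]) (use memK in auto)
  have pair: "f M + f (L - M) \<le> S * ln 2" if M: "M \<in> ?K" for M
  proof -
    have fM: "finite M" using M assms finite_subset by blast
    have "card (L - M) = card L - card M" using card_Diff_subset[OF fM] M by auto
    hence cLM: "card (L - M) = m" using M assms by simp
    have "M \<noteq> {}" using M assms by auto
    hence p1: "(\<Sum>i\<in>M. v i) > 0" using M assms fM by (intro sum_pos) auto
    have "card (L - M) \<noteq> 0" using cLM assms by simp
    hence "L - M \<noteq> {}" by (metis card.empty)
    hence p2: "(\<Sum>i\<in>L - M. v i) > 0" using assms by (intro sum_pos) auto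
    have sp: "S = (\<Sum>i\<in>M. v i) + (\<Sum>i\<in>L - M. v i)"
      unfolding S_def using sum.subset_diff[of M L v] M assms(1) by simp
    show ?thesis unfolding f_def sp using binent[OF p1 p2] by simp
  qed
  have "2 * (\<Sum>M\<in>?K. f M) = (\<Sum>M\<in>?K. f M + f (L - M))"
    using re by (simp add: sum.distrib)
  also have "\<dots> \<le> (\<Sum>M\<in>?K. S * ln 2)" using pair by (intro sum_mono) auto
  also have "\<dots> = real (card ?K) * S * ln 2" by simp
  finally show ?thesis unfolding f_def S_def by simp
qed



lemma term_eq:
  fixes v :: "nat \<Rightarrow> real"
  assumes "finite L" "M \<subseteq> L" "card M = m" "m \<ge> 1" "\<forall>i\<in>L. v i > 0"
  shows "(\<Sum>l\<in>M. eta m L (M - {l}) * v l) * Ent (\<lambda>l. eta m L (M - {l}) * v l) M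
       = (1 / real ((2*m) choose (m-1))) * (\<Sum>l\<in>M. v l * ln ((\<Sum>i\<in>M. v i) / v l))"
proof -
  define \<eta> where "\<eta> = 1 / real ((2*m) choose (m-1))"
  have etap: "\<eta> > 0" unfolding \<eta>_def using assms by simp
  have fM: "finite M" using assms finite_subset by blast
  have e: "eta m L (M - {l}) * v l = \<eta> * v l" if "l \<in> M" for l
  proof -
    have "card (M - {l}) = m - 1" using that fM assms by simp
    thus ?thesis using that assms unfolding eta_def \<eta>_def by auto
  qed
  define a where "a l = eta m L (M - {l}) * v l" for l
  have ap: "\<forall>i\<in>M. a i > 0"
  proof
    fix i assume i: "i \<in> M"
    hence "a i = \<eta> * v i" using e unfolding a_def by simp
    moreover have "v i > 0" using i assms by auto
    ultimately show "a i > 0" using etap by simp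
  qed
  have Mne: "M \<noteq> {}" using assms by auto
  have "(\<Sum>j\<in>M. a j) = (\<Sum>j\<in>M. \<eta> * v j)" by (rule sum.cong[OF refl]) (simp add: a_def e)
  hence sa: "(\<Sum>j\<in>M. a j) = \<eta> * (\<Sum>j\<in>M. v j)" by (simp add: sum_distrib_left)
  have "(\<Sum>j\<in>M. a j) * Ent a M = (\<Sum>i\<in>M. a i * ln ((\<Sum>j\<in>M. a j) / a i))"
    by (rule ent_eq[OF fM Mne ap])
  also have "\<dots> = (\<Sum>i\<in>M. \<eta> * (v i * ln ((\<Sum>j\<in>M. v j) / v i)))"
  proof (rule sum.cong[OF refl])
    fix i assume i: "i \<in> M"
    have "a i = \<eta> * v i" using e i unfolding a_def by simp
    thus "a i * ln ((\<Sum>j\<in>M. a j) / a i) = \<eta> * (v i * ln ((\<Sum>j\<in>M. v j) / v i))"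
      unfolding sa using etap by simp
  qed
  also have "\<dots> = \<eta> * (\<Sum>i\<in>M. v i * ln ((\<Sum>j\<in>M. v j) / v i))" by (simp add: sum_distrib_left)
  finally show ?thesis unfolding a_def \<eta>_def .
qed

lemma lhs_lower:
  fixes v :: "nat \<Rightarrow> real"
  assumes "finite L" "card L = 2*m" "m \<ge> 1" "\<forall>i\<in>L. v i > 0"
  shows "(\<Sum>M\<in>{M. M \<subseteq> L \<and> card M = m}. (1 / real ((2*m) choose (m-1))) * (\<Sum>l\<in>M. v l * ln ((\<Sum>i\<in>M. v i) / v l)))
     \<ge> (1/2) * ((\<Sum>i\<in>L. v i) * Ent v L) - (\<Sum>i\<in>L. v i) * ln 2"
proof -
  let ?K = "{M. M \<subseteq> L \<and> card M = m}"
  define S where "S = (\<Sum>i\<in>L. v i)"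
  define \<eta> where "\<eta> = 1 / real ((2*m) choose (m-1))"
  have etap: "\<eta> > 0" unfolding \<eta>_def using assms by simp
  have Lne: "L \<noteq> {}" using assms by auto
  have Sp: "S > 0" unfolding S_def using assms Lne by (intro sum_pos) auto
  have SE: "S * Ent v L = (\<Sum>l\<in>L. v l * ln (S / v l))" unfolding S_def by (rule ent_eq[OF assms(1) Lne assms(4)])
  have "Ent v L \<ge> 0" using ent_nonneg[OF assms(1)] assms(4) by (simp add: less_imp_le)
  hence SEn: "S * Ent v L \<ge> 0" using Sp by simp
  have split: "(\<Sum>l\<in>M. v l * ln ((\<Sum>i\<in>M. v i) / v l))
      = (\<Sum>l\<in>M. v l * ln (S / v l)) - (\<Sum>i\<in>M. v i) * ln (S / (\<Sum>i\<in>M. v i))" if M: "M \<in> ?K" for M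
  proof -
    have fM: "finite M" using M assms finite_subset by blast
    have "M \<noteq> {}" using M assms by auto
    hence pM: "(\<Sum>i\<in>M. v i) > 0" using M assms fM by (intro sum_pos) auto
    have "(\<Sum>l\<in>M. v l * ln ((\<Sum>i\<in>M. v i) / v l)) = (\<Sum>l\<in>M. v l * ln (S / v l) - v l * ln (S / (\<Sum>i\<in>M. v i)))"
    proof (rule sum.cong[OF refl])
      fix l assume "l \<in> M"
      hence "v l > 0" using M assms by auto
      thus "v l * ln ((\<Sum>i\<in>M. v i) / v l) = v l * ln (S / v l) - v l * ln (S / (\<Sum>i\<in>M. v i))"
        using pM Sp by (simp add: ln_div algebra_simps)
    qed
    also have "\<dots> = (\<Sum>l\<in>M. v l * ln (S / v l)) - (\<Sum>i\<in>M. v i) * ln (S / (\<Sum>i\<in>M. v i))"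
      by (simp add: sum_subtractf sum_distrib_right)
    finally show ?thesis .
  qed
  have T: "(\<Sum>M\<in>?K. \<eta> * (\<Sum>l\<in>M. v l * ln ((\<Sum>i\<in>M. v i) / v l)))
      = \<eta> * (\<Sum>M\<in>?K. \<Sum>l\<in>M. v l * ln (S / v l)) - \<eta> * (\<Sum>M\<in>?K. (\<Sum>i\<in>M. v i) * ln (S / (\<Sum>i\<in>M. v i)))"
    using split by (simp add: sum_distrib_left sum_subtractf right_diff_distrib)
  have X: "(\<Sum>M\<in>?K. \<Sum>l\<in>M. v l * ln (S / v l)) = real ((2*m-1) choose (m-1)) * (S * Ent v L)"
    unfolding SE by (rule double_count[OF assms(1-3)])
  have Y: "(\<Sum>M\<in>?K. (\<Sum>i\<in>M. v i) * ln (S / (\<Sum>i\<in>M. v i))) \<le> real (card ?K) * S * ln 2 / 2"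
    unfolding S_def by (rule compl_pair[OF assms])
  have Y2: "\<eta> * (\<Sum>M\<in>?K. (\<Sum>i\<in>M. v i) * ln (S / (\<Sum>i\<in>M. v i))) \<le> \<eta> * (real (card ?K) * S * ln 2 / 2)"
    using Y etap by (intro mult_left_mono) auto
  have A: "(\<Sum>M\<in>?K. \<eta> * (\<Sum>l\<in>M. v l * ln ((\<Sum>i\<in>M. v i) / v l)))
      \<ge> \<eta> * (real ((2*m-1) choose (m-1)) * (S * Ent v L)) - \<eta> * (real (card ?K) * S * ln 2 / 2)"
    unfolding T X using Y2 by linarith
  obtain k where k: "m = Suc k" using assms using not0_implies_Suc by force
  have cK: "card ?K = (2*m) choose m" using n_subsets[OF assms(1), of m] assms by simp
  have b1: "(Suc (Suc (2*k)) choose Suc k) \<le> 2 * (Suc (Suc (2*k)) choose k)"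
   and b2: "(Suc (Suc (2*k)) choose k) \<le> 2 * (Suc (2*k) choose k)" by (rule binom_facts)+
  have e1: "2*m = Suc (Suc (2*k))" "2*m - 1 = Suc (2*k)" "m - 1 = k" using k by auto
  have pos: "real (Suc (Suc (2*k)) choose k) > 0" by simp
  have rb2: "real (Suc (Suc (2*k)) choose k) \<le> 2 * real (Suc (2*k) choose k)"
  proof -
    have "real (Suc (Suc (2*k)) choose k) \<le> real (2 * (Suc (2*k) choose k))"
      using b2 by (simp only: of_nat_le_iff)
    thus ?thesis by simp
  qed
  have rb1: "real (Suc (Suc (2*k)) choose Suc k) \<le> 2 * real (Suc (Suc (2*k)) choose k)"
  proof -
    have "real (Suc (Suc (2*k)) choose Suc k) \<le> real (2 * (Suc (Suc (2*k)) choose k))"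
      using b1 by (simp only: of_nat_le_iff)
    thus ?thesis by simp
  qed
  have c1: "\<eta> * real ((2*m-1) choose (m-1)) \<ge> 1/2"
    unfolding \<eta>_def e1 using rb2 pos by (simp add: field_simps)
  have cK2: "real (card ?K) = real (Suc (Suc (2*k)) choose Suc k)"
    by (simp only: cK e1(1)) (simp only: k)
  have c2: "\<eta> * (real (card ?K) / 2) \<le> 1"
    unfolding \<eta>_def cK2 e1 using rb1 pos by (simp add: field_simps del: binomial_Suc_Suc)
  have "(1/2) * (S * Ent v L) \<le> (\<eta> * real ((2*m-1) choose (m-1))) * (S * Ent v L)"
    using c1 SEn by (intro mult_right_mono) auto
  hence "\<eta> * (real ((2*m-1) choose (m-1)) * (S * Ent v L)) \<ge> (1/2) * (S * Ent v L)"
    by (simp add: mult.assoc)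
  moreover have "\<eta> * (real (card ?K) * S * ln 2 / 2) \<le> S * ln 2"
  proof -
    have "\<eta> * (real (card ?K) * S * ln 2 / 2) = (\<eta> * (real (card ?K) / 2)) * (S * ln 2)" by simp
    also have "\<dots> \<le> 1 * (S * ln 2)" using c2 Sp by (intro mult_right_mono) auto
    finally show ?thesis by simp
  qed
  ultimately show ?thesis using A unfolding S_def \<eta>_def by linarith
qed



lemma grp_index:
  fixes y :: real assumes "y \<ge> 1"
  shows "\<exists>j\<ge>1. 2^(j-1) \<le> y \<and> y < 2^j"
proof -
  obtain n where n: "y < 2^n" using real_arch_pow[of 2 y] by auto
  define j where "j = (LEAST j. y < (2::real)^j)"
  have j1: "y < 2^j" unfolding j_def using n by (rule LeastI)
  have "j \<noteq> 0" using j1 assms by (metis linorder_not_le power_0)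
  moreover have "\<not> y < 2^(j-1)"
  proof
    assume "y < 2^(j-1)"
    hence "j \<le> j - 1" unfolding j_def by (rule Least_le)
    thus False using \<open>j \<noteq> 0\<close> by simp
  qed
  ultimately show ?thesis using j1 by (intro exI[of _ j]) auto
qed

lemma geom:
  fixes q :: real
  shows "(q - 1) * (\<Sum>j\<in>{1..J}. q^j) = q^(J+1) - q"
proof (induction J)
  case 0 thus ?case by simp
next
  case (Suc J)
  have "(q - 1) * (\<Sum>j\<in>{1..Suc J}. q^j) = (q - 1) * (\<Sum>j\<in>{1..J}. q^j) + (q - 1) * q^(Suc J)"
    by (simp add: distrib_left)
  also have "\<dots> = q^(Suc J + 1) - q" using Suc by (simp add: algebra_simps)
  finally show ?case .
qed

lemma geom_sqrt2:
  assumes "J \<ge> 1"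
  shows "(\<Sum>j\<in>{1..J}. sqrt 2 ^ j) \<le> 5 / 2 * (2 * sqrt (2 ^ (J - 1)))"
proof -
  let ?q = "sqrt (2::real)"
  have q14: "?q \<ge> 1.4" by (rule real_le_rsqrt) (simp add: power2_eq_square)
  have "(?q - 1) * (\<Sum>j\<in>{1..J}. ?q^j) = ?q^(J+1) - ?q" by (rule geom)
  hence le1: "(?q - 1) * (\<Sum>j\<in>{1..J}. ?q^j) \<le> ?q^(J+1)" by simp
  have jj: "J + 1 = 2 + (J - 1)" using assms by simp
  have "?q^(J+1) = ?q^2 * ?q^(J-1)" by (simp only: jj power_add)
  also have "\<dots> = 2 * sqrt (2^(J-1))" by (simp add: real_sqrt_power)
  finally have e: "?q^(J+1) = 2 * sqrt (2^(J-1))" .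
  have nn: "(\<Sum>j\<in>{1..J}. ?q^j) \<ge> 0" by (intro sum_nonneg) auto
  have "(2/5) * (\<Sum>j\<in>{1..J}. ?q^j) \<le> (?q - 1) * (\<Sum>j\<in>{1..J}. ?q^j)"
    using q14 nn by (intro mult_right_mono) auto
  thus ?thesis using le1 e by simp
qed

lemma minvar_props:
  assumes "\<forall>i\<in>{1..n}. v i > 0" "n \<ge> 1"
  shows "minvar n v > 0" "\<And>x. x \<in> {1..n} \<Longrightarrow> minvar n v \<le> v x"
proof -
  have ne: "v ` {1..n} \<noteq> {}" using assms by auto
  have "Min (v ` {1..n}) \<in> v ` {1..n}" using ne by (intro Min_in) auto
  thus "minvar n v > 0" unfolding minvar_def using assms by auto
  show "\<And>x. x \<in> {1..n} \<Longrightarrow> minvar n v \<le> v x" unfolding minvar_def by (intro Min_le) auto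
qed

lemma sqrt_group_bound:
  assumes pos: "\<forall>i\<in>{1..n}. v i > 0" and n1: "n \<ge> 1"
    and adm: "admissible_Gr n m v R" and AR: "A \<subseteq> R"
    and Aa: "\<forall>x\<in>A. v x \<le> a" and amin: "a \<ge> minvar n v"
  shows "(\<Sum>x\<in>A. sqrt (v x)) \<le> 10 * real m * sqrt a"
proof -
  define \<mu> where "\<mu> = minvar n v"
  have mup: "\<mu> > 0" and mule: "\<And>x. x \<in> {1..n} \<Longrightarrow> \<mu> \<le> v x"
    using minvar_props[OF pos n1] unfolding \<mu>_def by auto
  have Rn: "R \<subseteq> {1..n}" using adm unfolding admissible_Gr_def by auto
  have fA: "finite A" using AR Rn finite_subset by (metis finite_atLeastAtMost)
  have "a / \<mu> \<ge> 1" using amin mup unfolding \<mu>_def by simp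
  then obtain J where J: "J \<ge> 1" "2^(J-1) \<le> a / \<mu>" "a / \<mu> < 2^J" using grp_index by blast
  have ap: "a > 0" using amin mup unfolding \<mu>_def by simp
  define idx where "idx x = (SOME j. j \<ge> 1 \<and> 2^(j-1) \<le> v x / \<mu> \<and> v x / \<mu> < (2::real)^j)" for x
  have idx: "idx x \<ge> 1 \<and> 2^(idx x - 1) \<le> v x / \<mu> \<and> v x / \<mu> < (2::real)^(idx x)" if "x \<in> A" for x
  proof -
    have "x \<in> {1..n}" using that AR Rn by auto
    hence "v x / \<mu> \<ge> 1" using mule mup by simp
    from grp_index[OF this] show ?thesis unfolding idx_def by (rule someI_ex)
  qed
  have idxJ: "idx x \<in> {1..J}" if "x \<in> A" for x
  proof -
    have "v x / \<mu> \<le> a / \<mu>" using Aa that mup by (simp add: divide_right_mono)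
    hence "(2::real)^(idx x - 1) < 2^J" using idx[OF that] J by linarith
    hence "idx x - 1 < J" by (simp add: power_strict_increasing_iff)
    thus ?thesis using idx[OF that] by auto
  qed
  have cardj: "card {x \<in> A. idx x = j} \<le> 2 * m" if j: "j \<in> {1..J}" for j
  proof -
    have sub: "{x \<in> A. idx x = j} \<subseteq> R \<inter> grp n v j"
    proof
      fix x assume x: "x \<in> {x \<in> A. idx x = j}"
      hence "x \<in> {1..n}" using AR Rn by auto
      thus "x \<in> R \<inter> grp n v j" using x idx[of x] AR unfolding grp_def \<mu>_def by auto
    qed
    have fg: "finite (grp n v j)" unfolding grp_def by auto
    have "card (R \<inter> grp n v j) \<le> 2 * m"
    proof (cases "card (grp n v j) \<le> 2 * m")
      case True
      hence "R \<inter> grp n v j = grp n v j" using adm j unfolding admissible_Gr_def by auto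
      thus ?thesis using True by simp
    next
      case False
      thus ?thesis using adm j unfolding admissible_Gr_def by auto
    qed
    moreover have "card {x \<in> A. idx x = j} \<le> card (R \<inter> grp n v j)"
      using sub fg by (intro card_mono) auto
    ultimately show ?thesis by simp
  qed
  have "(\<Sum>x\<in>A. sqrt (v x)) = (\<Sum>j\<in>{1..J}. \<Sum>x\<in>{x \<in> A. idx x = j}. sqrt (v x))"
    using idxJ fA by (intro sum.group[symmetric]) auto
  also have "\<dots> \<le> (\<Sum>j\<in>{1..J}. real (2 * m) * (sqrt \<mu> * sqrt 2 ^ j))"
  proof (rule sum_mono)
    fix j assume j: "j \<in> {1..J}"
    have "(\<Sum>x\<in>{x \<in> A. idx x = j}. sqrt (v x)) \<le> (\<Sum>x\<in>{x \<in> A. idx x = j}. sqrt (\<mu> * 2^j))"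
    proof (rule sum_mono)
      fix x assume x: "x \<in> {x \<in> A. idx x = j}"
      hence "v x / \<mu> < 2^j" using idx by auto
      hence "v x \<le> \<mu> * 2^j" using mup by (simp add: field_simps)
      thus "sqrt (v x) \<le> sqrt (\<mu> * 2^j)" by simp
    qed
    also have "\<dots> = real (card {x \<in> A. idx x = j}) * (sqrt \<mu> * sqrt 2 ^ j)"
      by (simp add: real_sqrt_mult real_sqrt_power)
    also have "\<dots> \<le> real (2 * m) * (sqrt \<mu> * sqrt 2 ^ j)"
      using cardj[OF j] mup by (intro mult_right_mono) auto
    finally show "(\<Sum>x\<in>{x \<in> A. idx x = j}. sqrt (v x)) \<le> real (2 * m) * (sqrt \<mu> * sqrt 2 ^ j)" .
  qed
  also have "\<dots> = real (2 * m) * sqrt \<mu> * (\<Sum>j\<in>{1..J}. sqrt 2 ^ j)"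
    by (simp add: sum_distrib_left mult.assoc)
  also have "\<dots> \<le> real (2 * m) * sqrt \<mu> * (5 / 2 * (2 * sqrt (2 ^ (J - 1))))"
    using geom_sqrt2[OF J(1)] mup by (intro mult_left_mono) auto
  also have "\<dots> \<le> real (2 * m) * sqrt \<mu> * (5 / 2 * (2 * sqrt (a / \<mu>)))"
    using J(2) mup by (intro mult_left_mono) auto
  also have "sqrt \<mu> * sqrt (a / \<mu>) = sqrt a" using mup by (simp add: real_sqrt_mult[symmetric])
  hence "real (2 * m) * sqrt \<mu> * (5 / 2 * (2 * sqrt (a / \<mu>))) = 10 * real m * sqrt a"
    by (simp add: algebra_simps; metis mult.assoc mult.left_commute)
  finally show ?thesis .
qed



lemma key_mlog:
  fixes v :: "nat \<Rightarrow> real"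
  assumes fL: "finite L" and cL: "card L = 2*m" and m1: "m \<ge> 1" and pos: "\<forall>i\<in>L. v i > 0"
    and a0: "a > 0" and aL: "\<forall>x\<in>L. a \<le> v x"
  shows "real m * (a * ln ((\<Sum>i\<in>L. v i) / a)) \<le> 4 * (\<Sum>l\<in>L. v l * ln ((\<Sum>i\<in>L. v i) / v l))"
proof -
  define S where "S = (\<Sum>i\<in>L. v i)"
  have Lne: "L \<noteq> {}" using cL m1 by auto
  have "Max (v ` L) \<in> v ` L" using fL Lne by (intro Max_in) auto
  then obtain imax where im: "imax \<in> L" "v imax = Max (v ` L)" by auto
  have vmax: "v x \<le> v imax" if "x \<in> L" for x using im that fL by auto
  have vleS: "v x \<le> S" if "x \<in> L" for x
    unfolding S_def using that fL pos by (intro member_le_sum) (auto simp: less_imp_le)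
  have nn: "v l * ln (S / v l) \<ge> 0" if "l \<in> L" for l
    using vleS[OF that] pos that by (intro mult_nonneg_nonneg) auto
  have aS: "a \<le> S" using aL vleS im by force
  have al: "a * ln (S / a) \<ge> 0" using a0 aS by (intro mult_nonneg_nonneg) auto
  have each: "a * ln (S / a) \<le> 4 * (v x * ln (S / v x))" if x: "x \<in> L - {imax}" for x
  proof -
    have "{x, imax} \<subseteq> L" using x im by auto
    hence "(\<Sum>i\<in>{x, imax}. v i) \<le> S" unfolding S_def using fL pos
      by (intro sum_mono2) (auto simp: less_imp_le)
    hence "v x + v imax \<le> S" using x by simp
    moreover have "v x \<le> v imax" using vmax x by auto
    ultimately have "2 * v x \<le> S" by linarith
    thus ?thesis using lemG[of a "v x" S] a0 aL x by auto
  qed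
  have "real m * (a * ln (S / a)) \<le> real (2*m - 1) * (a * ln (S / a))"
    using m1 al by (intro mult_right_mono) auto
  also have "\<dots> = (\<Sum>x\<in>L - {imax}. a * ln (S / a))" using fL im cL by simp
  also have "\<dots> \<le> (\<Sum>x\<in>L - {imax}. 4 * (v x * ln (S / v x)))" using each by (intro sum_mono) auto
  also have "\<dots> \<le> (\<Sum>x\<in>L. 4 * (v x * ln (S / v x)))" using fL nn by (intro sum_mono2) auto
  also have "\<dots> = 4 * (\<Sum>x\<in>L. v x * ln (S / v x))" by (simp add: sum_distrib_left)
  finally show ?thesis unfolding S_def .
qed

lemma main_bound:
  fixes v :: "nat \<Rightarrow> real"
  assumes m1: "1 \<le> m" and nm: "n > 2 * m" and pos: "\<forall>i\<in>{1..n}. v i > 0"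
    and gr: "is_Gr n m v R" and top: "is_top m v R L"
  shows "(\<Sum>M\<in>{M. M \<subseteq> {1..n} \<and> card M = m}.
          (\<Sum>l\<in>M. eta m L (M - {l}) * v l) * Ent (\<lambda>l. eta m L (M - {l}) * v l) M)
      \<ge> (1/200) * (\<Sum>i\<in>Gl n m v. v i) * Ent v R - ln 2 * (\<Sum>i\<in>L. v i)"
proof -
  have adm: "admissible_Gr n m v R" using gr unfolding is_Gr_def by auto
  have Rn: "R \<subseteq> {1..n}" using adm unfolding admissible_Gr_def by auto
  have LR: "L \<subseteq> R" and cL: "card L = 2 * m" and topv: "\<forall>i\<in>L. \<forall>j\<in>R - L. v j \<le> v i"
    using top unfolding is_top_def by auto
  have n1: "n \<ge> 1" using nm by simp
  have fR: "finite R" using Rn finite_subset by (metis finite_atLeastAtMost)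
  have fL: "finite L" using LR fR finite_subset by blast
  have posR: "\<forall>i\<in>R. v i > 0" using Rn pos by auto
  have posL: "\<forall>i\<in>L. v i > 0" using LR posR by auto
  have Lne: "L \<noteq> {}" using cL m1 by auto
  have Rne: "R \<noteq> {}" using Lne LR by auto
  define a where "a = Min (v ` L)"
  have "a \<in> v ` L" unfolding a_def using fL Lne by (intro Min_in) auto
  then obtain i0 where i0: "i0 \<in> L" "a = v i0" by auto
  have aL: "\<forall>x\<in>L. a \<le> v x" unfolding a_def using fL by auto
  have a0: "a > 0" using i0 posL by auto
  have amin: "a \<ge> minvar n v" using i0 LR Rn minvar_props(2)[OF pos n1, of i0] by auto
  define A where "A = R - L"
  have AR: "A \<subseteq> R" unfolding A_def by auto
  have fA: "finite A" using AR fR finite_subset by blast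
  have Aa: "\<forall>x\<in>A. v x \<le> a" using topv i0 unfolding A_def by auto
  have posA: "\<forall>x\<in>A. v x > 0" using AR posR by auto
  have sq: "(\<Sum>x\<in>A. sqrt (v x)) \<le> 10 * real m * sqrt a"
    by (rule sqrt_group_bound[OF pos n1 adm AR Aa amin])
  define S where "S = (\<Sum>i\<in>L. v i)"
  define N where "N = (\<Sum>i\<in>R. v i)"
  define SA where "SA = (\<Sum>i\<in>A. v i)"
  have SA0: "SA \<ge> 0" unfolding SA_def using posA by (intro sum_nonneg) (auto simp: less_imp_le)
  have SAb: "SA \<le> 10 * real m * a"
  proof -
    have "SA \<le> (\<Sum>x\<in>A. sqrt a * sqrt (v x))" unfolding SA_def
    proof (rule sum_mono)
      fix x assume x: "x \<in> A"
      have "v x = sqrt (v x) * sqrt (v x)" using posA x by (simp add: abs_of_pos)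
      also have "\<dots> \<le> sqrt a * sqrt (v x)" using Aa posA x by (intro mult_right_mono) (auto simp: less_imp_le)
      finally show "v x \<le> sqrt a * sqrt (v x)" .
    qed
    also have "\<dots> = sqrt a * (\<Sum>x\<in>A. sqrt (v x))" by (simp add: sum_distrib_left)
    also have "\<dots> \<le> sqrt a * (10 * real m * sqrt a)" using sq a0 by (intro mult_left_mono) auto
    also have "\<dots> = 10 * real m * a" using a0 by (simp add: algebra_simps)
    finally show ?thesis .
  qed
  have Sge: "2 * real m * a \<le> S"
  proof -
    have "(\<Sum>i\<in>L. a) \<le> S" unfolding S_def using aL by (intro sum_mono) auto
    thus ?thesis using cL by simp
  qed
  have "2 * real m * a > 0" using m1 a0 by simp
  hence Sp: "S > 0" using Sge by linarith
  have NS: "N = S + SA" unfolding N_def S_def SA_def A_def using sum.subset_diff[OF LR fR, of v] by simp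
  have NS5: "N - S \<le> 5 * S" using NS SAb Sge by linarith
  have Np: "N > 0" using NS Sp SA0 by linarith
  have NE: "N * Ent v R = (\<Sum>i\<in>R. v i * ln (N / v i))" unfolding N_def by (rule ent_eq[OF fR Rne posR])
  have SE: "S * Ent v L = (\<Sum>i\<in>L. v i * ln (S / v i))" unfolding S_def by (rule ent_eq[OF fL Lne posL])
  have EL0: "Ent v L \<ge> 0" using ent_nonneg[OF fL] posL by (simp add: less_imp_le)
  have ER0: "Ent v R \<ge> 0" using ent_nonneg[OF fR] posR by (simp add: less_imp_le)
  have SE0: "S * Ent v L \<ge> 0" using EL0 Sp by simp
  have split: "(\<Sum>i\<in>R. v i * ln (N / v i)) = (\<Sum>i\<in>L. v i * ln (N / v i)) + (\<Sum>i\<in>A. v i * ln (N / v i))"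
    unfolding A_def using sum.subset_diff[OF LR fR, of "\<lambda>i. v i * ln (N / v i)"] by simp
  have partL: "(\<Sum>i\<in>L. v i * ln (N / v i)) \<le> S * Ent v L + 5 * S"
  proof -
    have "(\<Sum>i\<in>L. v i * ln (N / v i)) = (\<Sum>i\<in>L. v i * ln (S / v i) + v i * ln (N / S))"
    proof (rule sum.cong[OF refl])
      fix i assume "i \<in> L"
      hence "v i > 0" using posL by auto
      thus "v i * ln (N / v i) = v i * ln (S / v i) + v i * ln (N / S)"
        using Sp Np by (simp add: ln_div algebra_simps)
    qed
    also have "\<dots> = S * Ent v L + S * ln (N / S)" unfolding SE by (simp add: sum.distrib sum_distrib_right S_def)
    also have "S * ln (N / S) \<le> S * (N / S - 1)" using Sp Np by (intro mult_left_mono ln_le_minus_one) auto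
    also have "S * (N / S - 1) = N - S" using Sp by (simp add: field_simps)
    finally show ?thesis using NS5 by linarith
  qed
  have lnNa: "ln (N / a) \<le> 5 + ln (S / a)"
  proof -
    have "ln (N / a) = ln (N / S) + ln (S / a)" using Np Sp a0 by (simp add: ln_div)
    moreover have "ln (N / S) \<le> N / S - 1" using Np Sp by (intro ln_le_minus_one) auto
    moreover have "N / S - 1 \<le> 5" using NS5 Sp by (simp add: field_simps)
    ultimately show ?thesis by linarith
  qed
  have "1 \<le> 2 * real m" using m1 by simp
  hence "1 * a \<le> (2 * real m) * a" using a0 by (intro mult_right_mono) auto
  hence aS: "a \<le> S" using Sge by simp
  have aN: "a \<le> N" using aS NS SA0 by linarith
  have lnNa0: "ln (N / a) \<ge> 0" using aN a0 by simp
  have "real m * (a * ln (S / a)) \<le> 4 * (\<Sum>i\<in>L. v i * ln (S / v i))"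
    unfolding S_def by (rule key_mlog[OF fL cL m1 posL a0 aL])
  hence km: "real m * (a * ln (S / a)) \<le> 4 * (S * Ent v L)" unfolding SE .
  have partA: "(\<Sum>i\<in>A. v i * ln (N / v i)) \<le> 40 * (S * Ent v L) + 35 * S"
  proof -
    have "(\<Sum>i\<in>A. v i * ln (N / v i)) \<le> (\<Sum>i\<in>A. v i * ln (N / a) + 2 * sqrt a * sqrt (v i))"
    proof (rule sum_mono)
      fix i assume i: "i \<in> A"
      have vp: "v i > 0" using posA i by auto
      have "ln (N / v i) = ln (N / a) + ln (a / v i)" using vp a0 Np by (simp add: ln_div)
      moreover have "ln (a / v i) \<le> 2 * sqrt (a / v i)" using vp a0 by (intro ln_le_2sqrt) auto
      moreover have "v i * sqrt (a / v i) = sqrt a * sqrt (v i)"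
      proof -
        have "v i * sqrt (a / v i) = sqrt (v i) * sqrt (v i) * (sqrt a / sqrt (v i))"
          using vp by (simp add: real_sqrt_divide)
        also have "\<dots> = sqrt a * sqrt (v i)" using vp by (simp add: field_simps)
        finally show ?thesis .
      qed
      ultimately have "v i * ln (N / v i) \<le> v i * ln (N / a) + v i * (2 * sqrt (a / v i))"
        using vp by (simp add: distrib_left)
      thus "v i * ln (N / v i) \<le> v i * ln (N / a) + 2 * sqrt a * sqrt (v i)"
        using \<open>v i * sqrt (a / v i) = sqrt a * sqrt (v i)\<close> by (simp add: algebra_simps)
    qed
    also have "\<dots> = SA * ln (N / a) + 2 * sqrt a * (\<Sum>i\<in>A. sqrt (v i))"
      unfolding SA_def by (simp add: sum.distrib sum_distrib_right sum_distrib_left)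
    also have "SA * ln (N / a) \<le> (10 * real m * a) * ln (N / a)"
      using SAb lnNa0 by (intro mult_right_mono) auto
    also have "\<dots> \<le> (10 * real m * a) * (5 + ln (S / a))"
      using lnNa a0 by (intro mult_left_mono) auto
    also have "2 * sqrt a * (\<Sum>i\<in>A. sqrt (v i)) \<le> 2 * sqrt a * (10 * real m * sqrt a)"
      using sq a0 by (intro mult_left_mono) auto
    also have "2 * sqrt a * (10 * real m * sqrt a) = 20 * real m * a" using a0 by (simp add: algebra_simps)
    also have "(10 * real m * a) * (5 + ln (S / a)) = 50 * (real m * a) + 10 * (real m * (a * ln (S / a)))"
      by (simp add: algebra_simps)
    finally show ?thesis using km Sge by linarith
  qed
  have NER: "N * Ent v R \<le> 41 * (S * Ent v L) + 40 * S"
    using NE split partL partA by linarith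
  have GlR: "Gl n m v \<subseteq> R"
  proof
    fix x assume "x \<in> Gl n m v"
    then obtain j where j: "1 \<le> j" "card (grp n v j) \<le> 2 * m" "x \<in> grp n v j"
      unfolding Gl_def by auto
    hence "R \<inter> grp n v j = grp n v j" using adm unfolding admissible_Gr_def by auto
    thus "x \<in> R" using j by auto
  qed
  have SGl: "(\<Sum>i\<in>Gl n m v. v i) \<le> N" unfolding N_def using GlR fR posR
    by (intro sum_mono2) (auto simp: less_imp_le)
  have SGl0: "(\<Sum>i\<in>Gl n m v. v i) \<ge> 0" using GlR posR by (intro sum_nonneg) (auto simp: less_imp_le)
  have RHS1: "(\<Sum>i\<in>Gl n m v. v i) * Ent v R \<le> 41 * (S * Ent v L) + 40 * S"
    using mult_right_mono[OF SGl ER0] NER by linarith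
  let ?U = "{M. M \<subseteq> {1..n} \<and> card M = m}"
  let ?K = "{M. M \<subseteq> L \<and> card M = m}"
  define tm where "tm M = (\<Sum>l\<in>M. eta m L (M - {l}) * v l) * Ent (\<lambda>l. eta m L (M - {l}) * v l) M" for M
  have eta0: "eta m L F \<ge> 0" for F unfolding eta_def by auto
  have tm0: "tm M \<ge> 0" if M: "M \<in> ?U" for M
  proof -
    have fM: "finite M" using M finite_subset[of M "{1..n}"] by auto
    have nn: "\<forall>l\<in>M. eta m L (M - {l}) * v l \<ge> 0" using M pos eta0 by (auto intro!: mult_nonneg_nonneg simp: less_imp_le)
    have "Ent (\<lambda>l. eta m L (M - {l}) * v l) M \<ge> 0" by (rule ent_nonneg[OF fM nn])
    moreover have "(\<Sum>l\<in>M. eta m L (M - {l}) * v l) \<ge> 0" using nn by (intro sum_nonneg) auto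
    ultimately show ?thesis unfolding tm_def by simp
  qed
  have fU: "finite ?U" by simp
  have KU: "?K \<subseteq> ?U" using LR Rn by auto
  have LHS0: "(\<Sum>M\<in>?U. tm M) \<ge> 0" using tm0 by (intro sum_nonneg) auto
  have "(\<Sum>M\<in>?K. tm M) \<le> (\<Sum>M\<in>?U. tm M)" using fU KU tm0 by (intro sum_mono2) auto
  moreover have "(\<Sum>M\<in>?K. tm M) = (\<Sum>M\<in>?K. (1 / real ((2*m) choose (m-1))) * (\<Sum>l\<in>M. v l * ln ((\<Sum>i\<in>M. v i) / v l)))"
    unfolding tm_def by (rule sum.cong[OF refl]) (rule term_eq[OF fL _ _ m1 posL]; auto)
  moreover have "(\<Sum>M\<in>?K. (1 / real ((2*m) choose (m-1))) * (\<Sum>l\<in>M. v l * ln ((\<Sum>i\<in>M. v i) / v l)))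
     \<ge> (1/2) * (S * Ent v L) - S * ln 2" unfolding S_def by (rule lhs_lower[OF fL cL m1 posL])
  ultimately have LHS1: "(\<Sum>M\<in>?U. tm M) \<ge> (1/2) * (S * Ent v L) - S * ln 2" by linarith
  have l2: "ln (2::real) \<ge> 1/2" by (rule ln2_half)
  have "S * ln 2 \<ge> S / 2" using l2 Sp by simp
  hence "(\<Sum>M\<in>?U. tm M) + ln 2 * S \<ge> (1/4) * (S * Ent v L) + S / 4"
    using LHS0 LHS1 by (simp add: mult.commute)
  moreover have "(1/200) * (\<Sum>i\<in>Gl n m v. v i) * Ent v R \<le> (41/200) * (S * Ent v L) + (40/200) * S"
    using RHS1 by simp
  ultimately have "(1/200) * (\<Sum>i\<in>Gl n m v. v i) * Ent v R \<le> (\<Sum>M\<in>?U. tm M) + ln 2 * S"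
    using SE0 Sp by linarith
  thus ?thesis unfolding tm_def S_def by simp
qed


theorem lemma7:
  shows "\<exists>c'::real. c' > 0 \<and>
    (\<forall>(m::nat) (n::nat) (v::nat \<Rightarrow> real) R L.
      1 \<le> m \<longrightarrow> n > 2 * m \<longrightarrow> (\<forall>i\<in>{1..n}. v i > 0) \<longrightarrow>
      is_Gr n m v R \<longrightarrow> is_top m v R L \<longrightarrow>
      (\<Sum>M\<in>{M. M \<subseteq> {1..n} \<and> card M = m}.
          (\<Sum>l\<in>M. eta m L (M - {l}) * v l) * Ent (\<lambda>l. eta m L (M - {l}) * v l) M)
      \<ge> c' * (\<Sum>i\<in>Gl n m v. v i) * Ent v R - ln 2 * (\<Sum>i\<in>L. v i))"
  apply (rule exI[of _ "1/200"])
  apply (intro conjI)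
   apply simp
  apply (intro allI impI)
  apply (rule main_bound)
      apply assumption+
  done

end
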